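(* Fix $x\in\mathcal{X}$ and $\alpha\in(0,1)$. Suppose Assumption A1 holds and $P_{\theta\sim\mathbb{P}^N}(H(x;\theta)=v_\alpha(x))=0$. Then $$\frac1n\sum_{i=1}^n\Big|\mathbb{1}_{\{\hat H^m(x;\theta_i)\ge\hat v^{n,m}_\alpha(x)\}}-\mathbb{1}_{\{H(x;\theta_i)\ge v_\alpha(x)\}}\Big|\to0\quad\text{with probability }1\text{ as } n,m\to\infty.$$
   Context: Setting. $\mathcal{X}\subset\mathbb{R}$ is a nonempty compact set of decisions. $\{\mathbb{P}_\theta\}_{\theta\in\Theta}$ is a parametric family of distributions of a random vector $\xi$, and $\mathbb{P}^N$ is a fixed (posterior) probability distribution on $\Theta$. $h:\mathcal{X}\times\mathbb{R}^{d_2}\to\mathbb{R}$, and $H(x;\theta) := \mathbb{E}_{\xi\sim\mathbb{P}_\theta}[h(x,\xi)]$, viewed as a random variable induced by $\theta\sim\mathbb{P}^N$. $\mathbb{E}_\theta$ denotes expectation over $\theta\sim\mathbb{P}^N$, $\mathbb{E}_{\mathbb{P}_\theta}$ expectation over $\xi\sim\mathbb{P}_\theta$, and $\mathbb{E}_{\theta,\mathbb{P}_\theta}[\cdot]:=\mathbb{E}_\theta[\mathbb{E}_{\mathbb{P}_\theta}[\cdot]]$. $\xi(\theta)$ denotes a sample from $\mathbb{P}_\theta$. Sampling and estimators. Draw $\theta_1,\dots,\theta_n$ i.i.d. from $\mathbb{P}^N$ and, for each $i$, $\xi_1(\theta_i),\dots,\xi_m(\theta_i)$ i.i.d. from $\mathbb{P}_{\theta_i}$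 (conditionally independent across $i$). Set $\hat H^m(x;\theta):=\frac1m\sum_{j=1}^m h(x,\xi_j(\theta))$. Let $\hat\theta^m_{(1)},\dots,\hat\theta^m_{(n)}$ be a reordering of $\theta_1,\dots,\theta_n$ with $\hat H^m(x;\hat\theta^m_{(1)})\le\dots\le\hat H^m(x;\hat\theta^m_{(n)})$, and $\hat v^{n,m}_\alpha(x):=\hat H^m(x;\hat\theta^m_{(\lceil\alpha n\rceil)})$. $v_\alpha(x):=\inf\{t:P_{\theta\sim\mathbb{P}^N}(H(x;\theta)\le t)\ge\alpha\}$. Let $\mathcal{E}(x,\xi(\theta)) := h(x,\xi(\theta))-H(x;\theta)$ and $\bar{\mathcal{E}}^m(x;\theta):=\sqrt m\cdot\frac1m\sum_{j=1}^m\mathcal{E}(x,\xi_j(\theta))$. A1. (i) For all $x\in\mathcal{X}$, $\tau_\theta^2:=\mathbb{E}_{\mathbb{P}_\theta}[h(x,\xi)^2]<\infty$ for $\mathbb{P}^N$-a.e. $\theta$ and $\tau^2:=\mathbb{E}_{\theta,\mathbb{P}_\theta}[h(x,\xi)^2]<\infty$. (ii) For each $m$ and all $x\in\mathcal{X}$, the joint density $p_m(h,e)$ of $(H(x;\theta),\bar{\mathcal{E}}^m(x;\theta))$ and its partial derivatives $\partial_h p_m$, $\partial_h^2 p_m$ exist for all $(h,e)$. (iii) For all $x\in\mathcal{X}$ there are nonnegative functions $g_{0,m},g_{1,m},g_{2,m}$ with $p_m(h,e)\le g_{0,m}(e)$, $|\partial_h p_m(h,e)|\le g_{1,m}(e)$,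 $|\partial_h^2p_m(h,e)|\le g_{2,m}(e)$ for all $(h,e)$, and $\sup_m\int|e|^r g_{i,m}(e)\,de<\infty$ for $i=0,1,2$ and $0\le r\le4$. *)

theory Defs
  imports "HOL-Probability.Probability"
begin

definition Hval :: "('p \<Rightarrow> 'e measure) \<Rightarrow> (real \<Rightarrow> 'e \<Rightarrow> real) \<Rightarrow> real \<Rightarrow> 'p \<Rightarrow> real" where
  "Hval P h x \<theta> = (\<integral>\<xi>. h x \<xi> \<partial>(P \<theta>))"

definition Hhat :: "(real \<Rightarrow> 'e \<Rightarrow> real) \<Rightarrow> real \<Rightarrow> nat \<Rightarrow> (nat \<Rightarrow> 'e) \<Rightarrow> real" where
  "Hhat h x m xs = (\<Sum>j<m. h x (xs j)) / real m"

definition quantile :: "'p measure \<Rightarrow> ('p \<Rightarrow> real) \<Rightarrow> real \<Rightarrow> real" where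
  "quantile Q f \<alpha> = Inf {t. measure Q {\<theta> \<in> space Q. f \<theta> \<le> t} \<ge> \<alpha>}"

definition order_stat :: "nat \<Rightarrow> (nat \<Rightarrow> real) \<Rightarrow> nat \<Rightarrow> real" where
  "order_stat n a k = sort (map a [0..<n]) ! (k - 1)"

text \<open>Law of one block (theta_i, (xi_j(theta_i))_j): theta ~ PN, then xi_j iid ~ P theta.\<close>
definition block_law :: "'p measure \<Rightarrow> ('p \<Rightarrow> 'e::euclidean_space measure) \<Rightarrow> ('p \<times> (nat \<Rightarrow> 'e)) measure" where
  "block_law PN P = PN \<bind> (\<lambda>\<theta>. distr (PiM UNIV (\<lambda>_::nat. P \<theta>))
        (PN \<Otimes>\<^sub>M PiM UNIV (\<lambda>_::nat. (borel :: 'e measure))) (\<lambda>s. (\<theta>, s)))"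

definition sampling_space :: "'p measure \<Rightarrow> ('p \<Rightarrow> 'e::euclidean_space measure) \<Rightarrow> (nat \<Rightarrow> 'p \<times> (nat \<Rightarrow> 'e)) measure" where
  "sampling_space PN P = PiM UNIV (\<lambda>_::nat. block_law PN P)"

definition vhat :: "(real \<Rightarrow> 'e \<Rightarrow> real) \<Rightarrow> real \<Rightarrow> real \<Rightarrow> nat \<Rightarrow> nat \<Rightarrow> (nat \<Rightarrow> 'p \<times> (nat \<Rightarrow> 'e)) \<Rightarrow> real" where
  "vhat h x \<alpha> n m \<omega> = order_stat n (\<lambda>i. Hhat h x m (snd (\<omega> i))) (nat \<lceil>\<alpha> * real n\<rceil>)"

text \<open>Law of (H(x;theta), bar E^m(x;theta)) with theta ~ PN and xi_1..xi_m iid ~ P theta.\<close>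
definition err_law :: "'p measure \<Rightarrow> ('p \<Rightarrow> 'e::euclidean_space measure) \<Rightarrow> (real \<Rightarrow> 'e \<Rightarrow> real) \<Rightarrow> real \<Rightarrow> nat \<Rightarrow> (real \<times> real) measure" where
  "err_law PN P h x m = PN \<bind> (\<lambda>\<theta>. distr (PiM {..<m} (\<lambda>_. P \<theta>)) borel
      (\<lambda>s. (Hval P h x \<theta>, sqrt (real m) * ((\<Sum>j<m. (h x (s j) - Hval P h x \<theta>)) / real m))))"

definition A1 :: "real set \<Rightarrow> 'p measure \<Rightarrow> ('p \<Rightarrow> 'e::euclidean_space measure) \<Rightarrow> (real \<Rightarrow> 'e \<Rightarrow> real) \<Rightarrow> bool" where
  "A1 X PN P h \<longleftrightarrow>
    (\<forall>x\<in>X.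
      (AE \<theta> in PN. (\<integral>\<^sup>+\<xi>. ennreal ((h x \<xi>)\<^sup>2) \<partial>(P \<theta>)) < \<infinity>) \<and>
      (\<integral>\<^sup>+\<theta>. (\<integral>\<^sup>+\<xi>. ennreal ((h x \<xi>)\<^sup>2) \<partial>(P \<theta>)) \<partial>PN) < \<infinity>) \<and>
    (\<forall>x\<in>X. \<exists>(p :: nat \<Rightarrow> real \<Rightarrow> real \<Rightarrow> real) p1 p2 (g0 :: nat \<Rightarrow> real \<Rightarrow> real) g1 g2.
      (\<forall>m\<ge>1.
         err_law PN P h x m = density lborel (\<lambda>z. ennreal (p m (fst z) (snd z))) \<and>
         (\<forall>hh e. p m hh e \<ge> 0) \<and>
         (\<forall>hh e. ((\<lambda>t. p m t e) has_real_derivative p1 m hh e) (at hh)) \<and>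
         (\<forall>hh e. ((\<lambda>t. p1 m t e) has_real_derivative p2 m hh e) (at hh)) \<and>
         (\<forall>e. g0 m e \<ge> 0 \<and> g1 m e \<ge> 0 \<and> g2 m e \<ge> 0) \<and>
         (\<forall>hh e. p m hh e \<le> g0 m e \<and> \<bar>p1 m hh e\<bar> \<le> g1 m e \<and> \<bar>p2 m hh e\<bar> \<le> g2 m e)) \<and>
      (\<forall>r::real. 0 \<le> r \<and> r \<le> 4 \<longrightarrow>
         (\<Squnion>m\<in>{1..}. \<integral>\<^sup>+e. ennreal (\<bar>e\<bar> powr r * g0 m e) \<partial>lborel) < \<infinity> \<and>
         (\<Squnion>m\<in>{1..}. \<integral>\<^sup>+e. ennreal (\<bar>e\<bar> powr r * g1 m e) \<partial>lborel) < \<infinity> \<and>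
         (\<Squnion>m\<in>{1..}. \<integral>\<^sup>+e. ennreal (\<bar>e\<bar> powr r * g2 m e) \<partial>lborel) < \<infinity>))"

end

theory Submission
  imports Defs "HOL-Library.Discrete_Functions"
begin
lemma coord_indep:
  assumes Q: "prob_space Q"
  shows "prob_space.indep_vars (PiM UNIV (\<lambda>_::nat. Q)) (\<lambda>_. Q) (\<lambda>k s. s k) UNIV"
proof -
  interpret product_prob_space "\<lambda>_::nat. Q" UNIV
    using Q by (simp add: product_prob_space_def product_sigma_finite_def prob_space_imp_sigma_finite product_prob_space_axioms_def)
  show ?thesis
  proof (subst indep_vars_iff_distr_eq_PiM)
    have 1: "(\<lambda>x::nat\<Rightarrow>_. restrict x UNIV) = (\<lambda>x. x)" by (auto simp: restrict_def)
    have 2: "(\<lambda>i::nat. distr (PiM UNIV (\<lambda>_. Q)) Q (\<lambda>x. x i)) = (\<lambda>_. Q)"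
      by (rule ext, rule PiM_component) simp
    show "distr (PiM UNIV (\<lambda>_. Q)) (PiM UNIV (\<lambda>_. Q)) (\<lambda>x. \<lambda>i\<in>UNIV. x i) = PiM UNIV (\<lambda>i::nat. distr (PiM UNIV (\<lambda>_. Q)) Q (\<lambda>x. x i))"
      unfolding 1 2 by (simp add: distr_id2)
  qed auto
qed

lemma PiM_nat_prob:
  assumes Q: "prob_space Q"
  shows "product_prob_space (\<lambda>_::nat. Q)"
  using Q by (simp add: product_prob_space_def product_sigma_finite_def prob_space_imp_sigma_finite product_prob_space_axioms_def)

lemma comp_integral:
  fixes f :: "'a \<Rightarrow> real"
  assumes Q: "prob_space Q" and f[measurable]: "f \<in> borel_measurable Q"
  shows "integrable (PiM UNIV (\<lambda>_::nat. Q)) (\<lambda>s. f (s j)) \<longleftrightarrow> integrable Q f"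
    and "(\<integral>s. f (s j) \<partial>PiM UNIV (\<lambda>_::nat. Q)) = (\<integral>x. f x \<partial>Q)"
proof -
  interpret product_prob_space "\<lambda>_::nat. Q" UNIV using PiM_nat_prob[OF Q] by (simp add: product_prob_space_def)
  have D: "distr (PiM UNIV (\<lambda>_::nat. Q)) Q (\<lambda>s. s j) = Q" by (rule PiM_component) simp
  show "integrable (PiM UNIV (\<lambda>_::nat. Q)) (\<lambda>s. f (s j)) \<longleftrightarrow> integrable Q f"
    using integrable_distr_eq[of "\<lambda>s. s j" "PiM UNIV (\<lambda>_::nat. Q)" Q f] D by simp
  show "(\<integral>s. f (s j) \<partial>PiM UNIV (\<lambda>_::nat. Q)) = (\<integral>x. f x \<partial>Q)"
    using integral_distr[of "\<lambda>s. s j" "PiM UNIV (\<lambda>_::nat. Q)" Q f] D by simp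
qed

lemma pair_integral:
  fixes g :: "'a \<Rightarrow> real"
  assumes Q: "prob_space Q" and g[measurable]: "g \<in> borel_measurable Q"
    and int: "integrable Q g" and ij: "i \<noteq> j"
  shows "integrable (PiM UNIV (\<lambda>_::nat. Q)) (\<lambda>s. g (s i) * g (s j))"
    and "(\<integral>s. g (s i) * g (s j) \<partial>PiM UNIV (\<lambda>_::nat. Q)) = (\<integral>x. g x \<partial>Q) * (\<integral>x. g x \<partial>Q)"
proof -
  interpret product_prob_space "\<lambda>_::nat. Q" UNIV using PiM_nat_prob[OF Q] by (simp add: product_prob_space_def)
  have ind: "indep_vars (\<lambda>_. borel) (\<lambda>k s. g (s k)) (UNIV::nat set)"
    by (rule indep_vars_compose2[OF coord_indep[OF Q]]) simp
  have ind2: "indep_vars (\<lambda>_. borel) (\<lambda>k s. g (s k)) {i, j}"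
    by (rule indep_vars_subset[OF ind]) simp
  have ii: "\<And>k. integrable (PiM UNIV (\<lambda>_::nat. Q)) (\<lambda>s. g (s k))"
    using comp_integral(1)[OF Q g] int by simp
  have pe: "\<And>s. (\<Prod>k\<in>{i,j}. g (s k)) = g (s i) * g (s j)" using ij by simp
  show "integrable (PiM UNIV (\<lambda>_::nat. Q)) (\<lambda>s. g (s i) * g (s j))"
    using indep_vars_integrable[OF _ ind2] ii by (simp add: pe)
  have "(\<integral>s. (\<Prod>k\<in>{i,j}. g (s k)) \<partial>PiM UNIV (\<lambda>_::nat. Q)) = (\<Prod>k\<in>{i,j}. \<integral>s. g (s k) \<partial>PiM UNIV (\<lambda>_::nat. Q))"
    using indep_vars_lebesgue_integral[OF _ ind2] ii by simp
  then show "(\<integral>s. g (s i) * g (s j) \<partial>PiM UNIV (\<lambda>_::nat. Q)) = (\<integral>x. g x \<partial>Q) * (\<integral>x. g x \<partial>Q)"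
    using ij comp_integral(2)[OF Q g] by (simp add: pe)
qed

lemma sum_sq_integral:
  fixes g :: "'a \<Rightarrow> real"
  assumes Q: "prob_space Q" and g[measurable]: "g \<in> borel_measurable Q"
    and sq: "integrable Q (\<lambda>x. (g x)\<^sup>2)" and m0: "(\<integral>x. g x \<partial>Q) = 0"
  shows "integrable (PiM UNIV (\<lambda>_::nat. Q)) (\<lambda>s. (\<Sum>j<m. g (s j))\<^sup>2)"
    and "(\<integral>s. (\<Sum>j<m. g (s j))\<^sup>2 \<partial>PiM UNIV (\<lambda>_::nat. Q)) = real m * (\<integral>x. (g x)\<^sup>2 \<partial>Q)"
proof -
  interpret Q: prob_space Q by (rule Q)
  have int: "integrable Q g" using Q.square_integrable_imp_integrable[OF g sq] .
  have sqe: "\<And>s. (\<Sum>j<m. g (s j))\<^sup>2 = (\<Sum>i<m. \<Sum>j<m. g (s i) * g (s j))"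
    by (simp add: power2_eq_square sum_product)
  have ij: "integrable (PiM UNIV (\<lambda>_::nat. Q)) (\<lambda>s. g (s i) * g (s j))" for i j
  proof (cases "i = j")
    case True
    have "integrable (PiM UNIV (\<lambda>_::nat. Q)) (\<lambda>s. (g (s i))\<^sup>2)"
      using comp_integral(1)[OF Q, of "\<lambda>x. (g x)\<^sup>2" i] sq by simp
    then show ?thesis using True by (simp add: power2_eq_square)
  next
    case False then show ?thesis using pair_integral(1)[OF Q g int] by simp
  qed
  have ijv: "(\<integral>s. g (s i) * g (s j) \<partial>PiM UNIV (\<lambda>_::nat. Q)) = (if i = j then (\<integral>x. (g x)\<^sup>2 \<partial>Q) else 0)" for i j
  proof (cases "i = j")
    case True
    have "(\<integral>s. (g (s i))\<^sup>2 \<partial>PiM UNIV (\<lambda>_::nat. Q)) = (\<integral>x. (g x)\<^sup>2 \<partial>Q)"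
      using comp_integral(2)[OF Q, of "\<lambda>x. (g x)\<^sup>2" i] by simp
    then show ?thesis using True by (simp add: power2_eq_square)
  next
    case False then show ?thesis using pair_integral(2)[OF Q g int] m0 by simp
  qed
  show "integrable (PiM UNIV (\<lambda>_::nat. Q)) (\<lambda>s. (\<Sum>j<m. g (s j))\<^sup>2)"
    unfolding sqe using ij by auto
  have "(\<integral>s. (\<Sum>j<m. g (s j))\<^sup>2 \<partial>PiM UNIV (\<lambda>_::nat. Q)) = (\<Sum>i<m. \<Sum>j<m. (\<integral>s. g (s i) * g (s j) \<partial>PiM UNIV (\<lambda>_::nat. Q)))"
    unfolding sqe using ij by (simp add: integral_sum)
  also have "\<dots> = (\<Sum>i<m. \<Sum>j<m. (if i = j then (\<integral>x. (g x)\<^sup>2 \<partial>Q) else 0))"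
    by (simp only: ijv)
  also have "\<dots> = real m * (\<integral>x. (g x)\<^sup>2 \<partial>Q)"
    by simp
  finally show "(\<integral>s. (\<Sum>j<m. g (s j))\<^sup>2 \<partial>PiM UNIV (\<lambda>_::nat. Q)) = real m * (\<integral>x. (g x)\<^sup>2 \<partial>Q)" .
qed

lemma floor_sqrt_at_top: "filterlim floor_sqrt at_top sequentially"
  unfolding filterlim_at_top
proof
  fix Z :: nat
  show "eventually (\<lambda>m. Z \<le> floor_sqrt m) sequentially"
    unfolding eventually_sequentially
    by (rule exI[of _ "Z^2"]) (auto intro: le_floor_sqrtI)
qed

lemma interp_sq:
  fixes a :: "nat \<Rightarrow> real"
  assumes nn: "\<And>j. 0 \<le> a j" and c: "(\<lambda>k. (\<Sum>j<k^2. a j) / real (k^2)) \<longlonglongrightarrow> \<mu>"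
  shows "(\<lambda>m. (\<Sum>j<m. a j) / real m) \<longlonglongrightarrow> \<mu>"
proof -
  define S where "S n = (\<Sum>j<n. a j)" for n
  have Smono: "S p \<le> S q" if "p \<le> q" for p q
    unfolding S_def using that nn by (intro sum_mono2) auto
  define L where "L k = (S (k^2) / real (k^2)) * ((real k / real (Suc k))^2)" for k
  define U where "U k = (S ((Suc k)^2) / real ((Suc k)^2)) * ((real (Suc k) / real k)^2)" for k
  have r1: "(\<lambda>k. (real k / real (Suc k))^2) \<longlonglongrightarrow> 1"
    using tendsto_power[OF LIMSEQ_n_over_Suc_n, of 2] by simp
  have r2: "(\<lambda>k. (real (Suc k) / real k)^2) \<longlonglongrightarrow> 1"
    using tendsto_power[OF LIMSEQ_Suc_n_over_n, of 2] by simp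
  have cS: "(\<lambda>k. S (k^2) / real (k^2)) \<longlonglongrightarrow> \<mu>" using c unfolding S_def .
  have cS': "(\<lambda>k. S ((Suc k)^2) / real ((Suc k)^2)) \<longlonglongrightarrow> \<mu>"
    using LIMSEQ_Suc[OF cS] .
  have L: "L \<longlonglongrightarrow> \<mu>" unfolding L_def using tendsto_mult[OF cS r1] by simp
  have U: "U \<longlonglongrightarrow> \<mu>" unfolding U_def using tendsto_mult[OF cS' r2] by simp
  have L': "(\<lambda>m. L (floor_sqrt m)) \<longlonglongrightarrow> \<mu>" by (rule filterlim_compose[OF L floor_sqrt_at_top])
  have U': "(\<lambda>m. U (floor_sqrt m)) \<longlonglongrightarrow> \<mu>" by (rule filterlim_compose[OF U floor_sqrt_at_top])
  have ev: "eventually (\<lambda>m. L (floor_sqrt m) \<le> S m / real m \<and> S m / real m \<le> U (floor_sqrt m)) sequentially"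
    unfolding eventually_sequentially
  proof (intro exI[of _ 1] allI impI)
    fix m :: nat assume m: "1 \<le> m"
    define t where "t = floor_sqrt m"
    have t1: "1 \<le> t" using m unfolding t_def by (simp add: Suc_le_eq)
    have tl: "t^2 \<le> m" unfolding t_def by simp
    have tu: "m < (Suc t)^2" unfolding t_def by (rule Suc_floor_sqrt_power2_gt)
    have S0: "0 \<le> S n" for n unfolding S_def using nn by (simp add: sum_nonneg)
    have "L t = S (t^2) / real ((Suc t)^2)"
      unfolding L_def using t1 by (simp add: power_divide field_simps)
    also have "\<dots> \<le> S m / real m"
    proof -
      have "S (t^2) \<le> S m" using Smono[OF tl] .
      moreover have "real m \<le> real ((Suc t)^2)" using tu by linarith
      ultimately show ?thesis using m S0[of "t^2"] S0[of m]
        by (intro frac_le) auto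
    qed
    finally have 1: "L t \<le> S m / real m" .
    have "S m / real m \<le> S ((Suc t)^2) / real (t^2)"
    proof -
      have "S m \<le> S ((Suc t)^2)" using Smono tu by simp
      moreover have "real (t^2) \<le> real m" using tl by linarith
      moreover have "0 < real (t^2)" using t1 by simp
      ultimately show ?thesis using S0[of m] S0[of "(Suc t)^2"]
        by (intro frac_le) auto
    qed
    also have "\<dots> = U t"
      unfolding U_def using t1 by (simp add: power_divide field_simps)
    finally show "L (floor_sqrt m) \<le> S m / real m \<and> S m / real m \<le> U (floor_sqrt m)"
      using 1 unfolding t_def by simp
  qed
  have "(\<lambda>m. S m / real m) \<longlonglongrightarrow> \<mu>"
    by (rule tendsto_sandwich[OF _ _ L' U']) (use ev in \<open>auto elim: eventually_mono\<close>)
  then show ?thesis unfolding S_def .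
qed

lemma sq_subseq_zero:
  fixes g :: "'a \<Rightarrow> real"
  assumes Q: "prob_space Q" and g[measurable]: "g \<in> borel_measurable Q"
    and sq: "integrable Q (\<lambda>x. (g x)\<^sup>2)" and m0: "(\<integral>x. g x \<partial>Q) = 0"
  shows "AE s in PiM UNIV (\<lambda>_::nat. Q). (\<lambda>k. (\<Sum>j<k^2. g (s j)) / real (k^2)) \<longlonglongrightarrow> 0"
proof -
  interpret product_prob_space "\<lambda>_::nat. Q" UNIV using PiM_nat_prob[OF Q] by (simp add: product_prob_space_def)
  let ?\<Omega> = "PiM UNIV (\<lambda>_::nat. Q)"
  define V where "V = (\<integral>x. (g x)\<^sup>2 \<partial>Q)"
  have one: "AE s in ?\<Omega>. eventually (\<lambda>k. \<bar>(\<Sum>j<k^2. g (s j)) / real (k^2)\<bar> < e) sequentially"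
    if e: "e > 0" for e
  proof -
    define A where "A k = {s\<in>space ?\<Omega>. e * real ((Suc k)^2) \<le> \<bar>\<Sum>j<(Suc k)^2. g (s j)\<bar>}" for k
    have Am[measurable]: "A k \<in> sets ?\<Omega>" for k unfolding A_def by measurable
    have mA: "measure ?\<Omega> (A k) \<le> V / e^2 * inverse (real (Suc k) ^ 2)" for k
    proof -
      have rv: "(\<lambda>s. \<Sum>j<(Suc k)^2. g (s j)) \<in> borel_measurable ?\<Omega>" by measurable
      have "measure ?\<Omega> (A k) \<le> (\<integral>s. (\<Sum>j<(Suc k)^2. g (s j))^2 \<partial>?\<Omega>) / (e * real ((Suc k)^2))\<^sup>2"
        unfolding A_def
        by (rule second_moment_method[OF rv sum_sq_integral(1)[OF Q g sq m0]]) (use e in simp)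
      also have "\<dots> = real ((Suc k)^2) * V / (e * real ((Suc k)^2))\<^sup>2"
        using sum_sq_integral(2)[OF Q g sq m0] unfolding V_def by simp
      also have "\<dots> = V / e^2 * inverse (real (Suc k) ^ 2)"
      proof -
        have gen: "n * V / (e * n)\<^sup>2 = V / e^2 * inverse n" if "n > 0" for n :: real
          using that e by (simp add: field_simps power2_eq_square)
        show ?thesis using gen[of "real ((Suc k)^2)"] by simp
      qed
      finally show ?thesis .
    qed
    have V0: "0 \<le> V" unfolding V_def by simp
    have summ: "summable (\<lambda>k. V / e^2 * inverse (real (Suc k) ^ 2))"
      by (rule summable_mult, subst summable_Suc_iff) (rule inverse_power_summable, simp)
    have "summable (\<lambda>k. measure ?\<Omega> (A k))"
      by (rule summable_comparison_test'[OF summ, of 0]) (use mA in simp)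
    then have "AE s in ?\<Omega>. eventually (\<lambda>k. s \<in> space ?\<Omega> - A k) sequentially"
      by (intro borel_cantelli_AE1) (auto simp: P.emeasure_eq_measure)
    then show ?thesis
    proof (rule eventually_mono)
      fix s assume "eventually (\<lambda>k. s \<in> space ?\<Omega> - A k) sequentially"
      then have ev: "eventually (\<lambda>k. \<bar>\<Sum>j<(Suc k)^2. g (s j)\<bar> < e * real ((Suc k)^2)) sequentially"
        by (rule eventually_mono) (auto simp: A_def)
      have "eventually (\<lambda>k. \<bar>(\<Sum>j<(Suc k)^2. g (s j)) / real ((Suc k)^2)\<bar> < e) sequentially"
        using ev by (rule eventually_mono) (simp add: divide_less_eq del: of_nat_Suc of_nat_power)
      then show "eventually (\<lambda>k. \<bar>(\<Sum>j<k^2. g (s j)) / real (k^2)\<bar> < e) sequentially"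
        by (subst eventually_sequentially_Suc[symmetric])
    qed
  qed
  have "AE s in ?\<Omega>. \<forall>l::nat. eventually (\<lambda>k. \<bar>(\<Sum>j<k^2. g (s j)) / real (k^2)\<bar> < inverse (real (Suc l))) sequentially"
    using one by (subst AE_all_countable) simp
  then show ?thesis
  proof (rule eventually_mono)
    fix s assume H: "\<forall>l::nat. eventually (\<lambda>k. \<bar>(\<Sum>j<k^2. g (s j)) / real (k^2)\<bar> < inverse (real (Suc l))) sequentially"
    show "(\<lambda>k. (\<Sum>j<k^2. g (s j)) / real (k^2)) \<longlonglongrightarrow> 0"
    proof (rule tendstoI)
      fix r :: real assume r: "r > 0"
      obtain l where l: "inverse (real (Suc l)) < r"
        using ex_inverse_of_nat_less[OF r] by (metis Suc_pred)
      show "eventually (\<lambda>k. dist ((\<Sum>j<k^2. g (s j)) / real (k^2)) 0 < r) sequentially"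
        using H[rule_format, of l] by (rule eventually_mono) (use l in simp)
    qed
  qed
qed

lemma slln_nonneg:
  fixes g :: "'a \<Rightarrow> real"
  assumes Q: "prob_space Q" and g[measurable]: "g \<in> borel_measurable Q"
    and sq: "integrable Q (\<lambda>x. (g x)\<^sup>2)" and nn: "\<And>x. 0 \<le> g x"
  shows "AE s in PiM UNIV (\<lambda>_::nat. Q). (\<lambda>m. (\<Sum>j<m. g (s j)) / real m) \<longlonglongrightarrow> (\<integral>x. g x \<partial>Q)"
proof -
  interpret Q: prob_space Q by (rule Q)
  define \<mu> where "\<mu> = (\<integral>x. g x \<partial>Q)"
  have int: "integrable Q g" using Q.square_integrable_imp_integrable[OF g sq] .
  have sq': "integrable Q (\<lambda>x. (g x - \<mu>)\<^sup>2)"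
    using sq int by (simp add: power2_diff)
  have m0: "(\<integral>x. g x - \<mu> \<partial>Q) = 0"
    using int by (simp add: \<mu>_def Q.prob_space)
  have A: "AE s in PiM UNIV (\<lambda>_::nat. Q). (\<lambda>k. (\<Sum>j<k^2. g (s j) - \<mu>) / real (k^2)) \<longlonglongrightarrow> 0"
    by (rule sq_subseq_zero[OF Q _ sq' m0]) simp
  show ?thesis
    unfolding \<mu>_def[symmetric] using A
  proof (rule eventually_mono)
    fix s assume H: "(\<lambda>k. (\<Sum>j<k^2. g (s j) - \<mu>) / real (k^2)) \<longlonglongrightarrow> 0"
    have eq: "eventually (\<lambda>k. (\<Sum>j<k^2. g (s j) - \<mu>) / real (k^2) + \<mu> = (\<Sum>j<k^2. g (s j)) / real (k^2)) sequentially"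
      unfolding eventually_sequentially
      by (rule exI[of _ 1]) (auto simp: sum_subtractf field_simps)
    have "(\<lambda>k. (\<Sum>j<k^2. g (s j) - \<mu>) / real (k^2) + \<mu>) \<longlonglongrightarrow> 0 + \<mu>"
      by (intro tendsto_add H tendsto_const)
    then have "(\<lambda>k. (\<Sum>j<k^2. g (s j)) / real (k^2)) \<longlonglongrightarrow> \<mu>"
      using tendsto_cong[OF eq] by simp
    then show "(\<lambda>m. (\<Sum>j<m. g (s j)) / real m) \<longlonglongrightarrow> \<mu>"
      by (intro interp_sq) (use nn in auto)
  qed
qed

lemma slln:
  fixes g :: "'a \<Rightarrow> real"
  assumes Q: "prob_space Q" and g[measurable]: "g \<in> borel_measurable Q"
    and sq: "integrable Q (\<lambda>x. (g x)\<^sup>2)"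
  shows "AE s in PiM UNIV (\<lambda>_::nat. Q). (\<lambda>m. (\<Sum>j<m. g (s j)) / real m) \<longlonglongrightarrow> (\<integral>x. g x \<partial>Q)"
proof -
  interpret Q: prob_space Q by (rule Q)
  define gp where "gp x = max (g x) 0" for x
  define gn where "gn x = max (- g x) 0" for x
  have [measurable]: "gp \<in> borel_measurable Q" "gn \<in> borel_measurable Q"
    unfolding gp_def gn_def by measurable
  have sqp: "integrable Q (\<lambda>x. (gp x)\<^sup>2)"
    by (rule Bochner_Integration.integrable_bound[OF sq]) (auto simp: gp_def max_def)
  have sqn: "integrable Q (\<lambda>x. (gn x)\<^sup>2)"
    by (rule Bochner_Integration.integrable_bound[OF sq]) (auto simp: gn_def max_def)
  have ip: "integrable Q gp" using Q.square_integrable_imp_integrable[OF _ sqp] by simp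
  have in': "integrable Q gn" using Q.square_integrable_imp_integrable[OF _ sqn] by simp
  have gdec: "g x = gp x - gn x" for x by (simp add: gp_def gn_def max_def)
  have Ig: "(\<integral>x. g x \<partial>Q) = (\<integral>x. gp x \<partial>Q) - (\<integral>x. gn x \<partial>Q)"
    unfolding gdec using ip in' by simp
  have P: "AE s in PiM UNIV (\<lambda>_::nat. Q). (\<lambda>m. (\<Sum>j<m. gp (s j)) / real m) \<longlonglongrightarrow> (\<integral>x. gp x \<partial>Q)"
    by (rule slln_nonneg[OF Q _ sqp]) (auto simp: gp_def)
  have N: "AE s in PiM UNIV (\<lambda>_::nat. Q). (\<lambda>m. (\<Sum>j<m. gn (s j)) / real m) \<longlonglongrightarrow> (\<integral>x. gn x \<partial>Q)"
    by (rule slln_nonneg[OF Q _ sqn]) (auto simp: gn_def)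
  from P N show ?thesis
  proof (eventually_elim)
    case (elim s)
    have "(\<lambda>m. (\<Sum>j<m. gp (s j)) / real m - (\<Sum>j<m. gn (s j)) / real m) \<longlonglongrightarrow> (\<integral>x. gp x \<partial>Q) - (\<integral>x. gn x \<partial>Q)"
      by (intro tendsto_diff elim)
    moreover have "(\<Sum>j<m. gp (s j)) / real m - (\<Sum>j<m. gn (s j)) / real m = (\<Sum>j<m. g (s j)) / real m" for m
      unfolding gdec by (simp add: sum_subtractf diff_divide_distrib)
    ultimately show ?case unfolding Ig by simp
  qed
qed

lemma Pi_kernel_meas:
  fixes PN :: "'p measure" and P :: "'p \<Rightarrow> 'e measure" and N :: "'e measure"
  assumes P: "P \<in> PN \<rightarrow>\<^sub>M prob_algebra N"
  shows "(\<lambda>\<theta>. PiM UNIV (\<lambda>_::nat. P \<theta>)) \<in> PN \<rightarrow>\<^sub>M prob_algebra (PiM UNIV (\<lambda>_::nat. N))"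
proof (rule measurable_prob_algebra_generated[OF sets_PiM Int_stable_prod_algebra prod_algebra_sets_into_space])
  fix a assume a: "a \<in> space PN"
  have Pa: "P a \<in> space (prob_algebra N)" using measurable_space[OF P a] .
  then show "prob_space (PiM UNIV (\<lambda>_::nat. P a))"
    by (intro prob_space_PiM) (simp add: space_prob_algebra)
  show "sets (PiM UNIV (\<lambda>_::nat. P a)) = sets (PiM UNIV (\<lambda>_::nat. N))"
    using Pa by (intro sets_PiM_cong) (auto simp: space_prob_algebra)
next
  fix A assume A: "A \<in> prod_algebra UNIV (\<lambda>_::nat. N)"
  then obtain J E where AJ: "A = prod_emb UNIV (\<lambda>_::nat. N) J (\<Pi>\<^sub>E j\<in>J. E j)"
    and J: "finite J" and E: "\<And>i. i \<in> J \<Longrightarrow> E i \<in> sets N"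
    by (auto elim!: prod_algebraE)
  have eq: "emeasure (PiM UNIV (\<lambda>_::nat. P a)) A = (\<Prod>j\<in>J. emeasure (P a) (E j))"
    if a: "a \<in> space PN" for a
  proof -
    have Pa: "P a \<in> space (prob_algebra N)" using measurable_space[OF P a] .
    then have sP: "sets (P a) = sets N" "prob_space (P a)" by (auto simp: space_prob_algebra)
    have "A = prod_emb UNIV (\<lambda>_::nat. P a) J (\<Pi>\<^sub>E j\<in>J. E j)"
      unfolding AJ prod_emb_def using sets_eq_imp_space_eq[OF sP(1)] by simp
    then show ?thesis using J E sP by (simp add: emeasure_PiM_emb)
  qed
  have "(\<lambda>a. \<Prod>j\<in>J. emeasure (P a) (E j)) \<in> borel_measurable PN"
  proof (intro borel_measurable_prod_ennreal)
    fix j assume "j \<in> J"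
    show "(\<lambda>a. emeasure (P a) (E j)) \<in> borel_measurable PN"
      by (rule measurable_compose[OF measurable_prob_algebraD[OF P] measurable_emeasure_subprob_algebra[OF E[OF \<open>j \<in> J\<close>]]])
  qed
  then show "(\<lambda>a. emeasure (PiM UNIV (\<lambda>_::nat. P a)) A) \<in> borel_measurable PN"
    by (rule measurable_cong[THEN iffD1, rotated]) (simp add: eq)
qed

context
  fixes PN :: "'p measure" and P :: "'p \<Rightarrow> 'e::euclidean_space measure"
  assumes PN: "prob_space PN" and P: "P \<in> PN \<rightarrow>\<^sub>M prob_algebra borel"
begin

definition "KK \<theta> = distr (PiM UNIV (\<lambda>_::nat. P \<theta>)) (PN \<Otimes>\<^sub>M PiM UNIV (\<lambda>_::nat. (borel :: 'e measure))) (\<lambda>s. (\<theta>, s))"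

lemma KK_meas: "KK \<in> PN \<rightarrow>\<^sub>M prob_algebra (PN \<Otimes>\<^sub>M PiM UNIV (\<lambda>_::nat. (borel :: 'e measure)))"
  unfolding KK_def
  by (rule measurable_distr_prob_space2[OF Pi_kernel_meas[OF P]]) simp

lemma block_law_bind: "block_law PN P = PN \<bind> KK"
  unfolding block_law_def KK_def ..

lemma block_prob: "prob_space (block_law PN P)"
  unfolding block_law_bind
  by (rule prob_space_bind'[OF _ KK_meas]) (simp add: space_prob_algebra PN)

lemma sets_block: "sets (block_law PN P) = sets (PN \<Otimes>\<^sub>M PiM UNIV (\<lambda>_::nat. (borel :: 'e measure)))"
  unfolding block_law_bind
  by (rule sets_bind[OF measurable_prob_algebraD[OF KK_meas, THEN sets_kernel]]) (use prob_space.not_empty[OF PN] in auto)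

lemma KK_sub: "KK \<in> PN \<rightarrow>\<^sub>M subprob_algebra (PN \<Otimes>\<^sub>M PiM UNIV (\<lambda>_::nat. (borel :: 'e measure)))"
  by (rule measurable_prob_algebraD[OF KK_meas])

lemma pair_meas:
  assumes th: "\<theta> \<in> space PN"
  shows "(\<lambda>s. (\<theta>, s)) \<in> PiM UNIV (\<lambda>_::nat. P \<theta>) \<rightarrow>\<^sub>M PN \<Otimes>\<^sub>M PiM UNIV (\<lambda>_::nat. (borel :: 'e measure))"
proof -
  have "sets (P \<theta>) = sets borel" using measurable_space[OF P th] by (simp add: space_prob_algebra)
  then have "sets (PiM UNIV (\<lambda>_::nat. P \<theta>)) = sets (PiM UNIV (\<lambda>_::nat. (borel :: 'e measure)))"
    by (intro sets_PiM_cong) auto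
  then have "(\<lambda>s. s) \<in> PiM UNIV (\<lambda>_::nat. P \<theta>) \<rightarrow>\<^sub>M PiM UNIV (\<lambda>_::nat. (borel :: 'e measure))"
    by (simp cong: measurable_cong_sets)
  then show ?thesis using th by (intro measurable_Pair) auto
qed

lemma AE_block:
  assumes Pr[measurable]: "Measurable.pred (PN \<Otimes>\<^sub>M PiM UNIV (\<lambda>_::nat. (borel :: 'e measure))) Pr"
    and H: "AE \<theta> in PN. AE s in PiM UNIV (\<lambda>_::nat. P \<theta>). Pr (\<theta>, s)"
  shows "AE b in block_law PN P. Pr b"
  unfolding block_law_bind
proof (subst AE_bind[OF KK_sub Pr])
  show "AE \<theta> in PN. AE y in KK \<theta>. Pr y"
    using H
  proof (rule AE_mp[OF _ AE_I2])
    fix \<theta> assume th: "\<theta> \<in> space PN"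
    show "(AE s in PiM UNIV (\<lambda>_::nat. P \<theta>). Pr (\<theta>, s)) \<longrightarrow> (AE y in KK \<theta>. Pr y)"
      unfolding KK_def by (subst AE_distr_iff[OF pair_meas[OF th]]) auto
  qed
qed

lemma distr_block_fst: "distr (block_law PN P) PN fst = PN"
proof (rule measure_eqI)
  show "sets (distr (block_law PN P) PN fst) = sets PN" by simp
next
  fix A assume A: "A \<in> sets (distr (block_law PN P) PN fst)"
  then have A': "A \<in> sets PN" by simp
  have fm: "fst \<in> block_law PN P \<rightarrow>\<^sub>M PN"
    by (simp add: measurable_cong_sets[OF sets_block refl])
  have X: "fst -` A \<inter> space (block_law PN P) = A \<times> space (PiM UNIV (\<lambda>_::nat. (borel :: 'e measure)))"
    using sets_eq_imp_space_eq[OF sets_block] sets.sets_into_space[OF A'] by (auto simp: space_pair_measure)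
  have "emeasure (distr (block_law PN P) PN fst) A = emeasure (block_law PN P) (A \<times> space (PiM UNIV (\<lambda>_::nat. (borel :: 'e measure))))"
    by (simp add: emeasure_distr[OF fm A'] X)
  also have "\<dots> = (\<integral>\<^sup>+\<theta>. emeasure (KK \<theta>) (A \<times> space (PiM UNIV (\<lambda>_::nat. (borel :: 'e measure)))) \<partial>PN)"
    unfolding block_law_bind
    by (rule emeasure_bind[OF _ KK_sub]) (use prob_space.not_empty[OF PN] A' in auto)
  also have "\<dots> = (\<integral>\<^sup>+\<theta>. indicator A \<theta> \<partial>PN)"
  proof (rule nn_integral_cong)
    fix \<theta> assume th: "\<theta> \<in> space PN"
    have ps: "prob_space (PiM UNIV (\<lambda>_::nat. P \<theta>))"
      using measurable_space[OF Pi_kernel_meas[OF P] th] by (simp add: space_prob_algebra)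
    have "emeasure (KK \<theta>) (A \<times> space (PiM UNIV (\<lambda>_::nat. (borel :: 'e measure)))) =
        emeasure (PiM UNIV (\<lambda>_::nat. P \<theta>)) ((\<lambda>s. (\<theta>, s)) -` (A \<times> space (PiM UNIV (\<lambda>_::nat. (borel :: 'e measure)))) \<inter> space (PiM UNIV (\<lambda>_::nat. P \<theta>)))"
      unfolding KK_def by (rule emeasure_distr[OF pair_meas[OF th]]) (use A' in auto)
    also have "\<dots> = indicator A \<theta>"
    proof (cases "\<theta> \<in> A")
      case True
      have "(\<lambda>s. (\<theta>, s)) -` (A \<times> space (PiM UNIV (\<lambda>_::nat. (borel :: 'e measure)))) \<inter> space (PiM UNIV (\<lambda>_::nat. P \<theta>)) = space (PiM UNIV (\<lambda>_::nat. P \<theta>))"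
        using True measurable_space[OF pair_meas[OF th]] by (auto simp: space_pair_measure)
      then show ?thesis using True prob_space.emeasure_space_1[OF ps] by simp
    next
      case False then show ?thesis by simp
    qed
    finally show "emeasure (KK \<theta>) (A \<times> space (PiM UNIV (\<lambda>_::nat. (borel :: 'e measure)))) = indicator A \<theta>" .
  qed
  also have "\<dots> = emeasure PN A" using A' by simp
  finally show "emeasure (distr (block_law PN P) PN fst) A = emeasure PN A" .
qed

end

lemma count_via_sort:
  "(\<Sum>i<n. of_bool (Pr (a i)) :: real) = real (card {j. j < n \<and> Pr (sort (map a [0..<n]) ! j)})"
proof -
  have "(\<Sum>i<n. of_bool (Pr (a i)) :: real) = real (card ({..<n} \<inter> {i. Pr (a i)}))"
    by (simp add: sum_of_bool_eq)
  also have "card ({..<n} \<inter> {i. Pr (a i)}) = length (filter Pr (map a [0..<n]))"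
    by (simp add: length_filter_conv_card Int_def conj_commute cong: conj_cong)
  also have "\<dots> = length (filter Pr (sort (map a [0..<n])))"
    by (metis mset_filter mset_sort size_mset)
  also have "\<dots> = card {j. j < n \<and> Pr (sort (map a [0..<n]) ! j)}"
    by (simp add: length_filter_conv_card)
  finally show ?thesis .
qed

lemma os_ge:
  assumes K: "1 \<le> K" "K \<le> n"
  shows "real n - real K + 1 \<le> (\<Sum>i<n. of_bool (order_stat n a K \<le> a i))"
proof -
  define xs where "xs = sort (map a [0..<n])"
  have len: "length xs = n" and so: "sorted xs" unfolding xs_def by simp_all
  have "{K - 1..<n} \<subseteq> {j. j < n \<and> order_stat n a K \<le> xs ! j}"
    using K len so unfolding order_stat_def xs_def[symmetric]
    by (auto intro: sorted_nth_mono)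
  then have "card {K - 1..<n} \<le> card {j. j < n \<and> order_stat n a K \<le> xs ! j}"
    by (intro card_mono) auto
  then show ?thesis
    unfolding count_via_sort xs_def[symmetric] using K by simp
qed

lemma os_gt:
  assumes K: "1 \<le> K" "K \<le> n"
  shows "(\<Sum>i<n. of_bool (order_stat n a K < a i)) \<le> real n - real K"
proof -
  define xs where "xs = sort (map a [0..<n])"
  have len: "length xs = n" and so: "sorted xs" unfolding xs_def by simp_all
  have "{j. j < n \<and> order_stat n a K < xs ! j} \<subseteq> {K..<n}"
  proof
    fix j assume j: "j \<in> {j. j < n \<and> order_stat n a K < xs ! j}"
    have "\<not> j \<le> K - 1"
    proof
      assume "j \<le> K - 1"
      then have "xs ! j \<le> xs ! (K - 1)" using so len K by (intro sorted_nth_mono) auto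
      then show False using j unfolding order_stat_def xs_def[symmetric] by simp
    qed
    then show "j \<in> {K..<n}" using j K by auto
  qed
  then have "card {j. j < n \<and> order_stat n a K < xs ! j} \<le> card {K..<n}"
    by (intro card_mono) auto
  then show ?thesis
    unfolding count_via_sort xs_def[symmetric] using K by simp
qed

lemma pw1:
  fixes a H v vh \<delta> :: real
  assumes d: "0 < \<delta>" and c: "v - 2*\<delta> \<le> vh" and bd: "\<delta> \<le> \<bar>a - H\<bar> \<Longrightarrow> Bd"
  shows "\<bar>of_bool (vh \<le> a) - of_bool (v \<le> H)\<bar> \<le> of_bool (v \<le> H) - of_bool (vh \<le> a)
           + 2 * (of_bool Bd + of_bool (v - 3*\<delta> < H \<and> H < v) :: real)"
proof (cases "vh \<le> a \<and> \<not> v \<le> H")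
  case True
  then have "Bd \<or> (v - 3*\<delta> < H \<and> H < v)" using c bd by (cases "\<delta> \<le> \<bar>a - H\<bar>") auto
  then show ?thesis using True by auto
next
  case False
  then show ?thesis by auto
qed

lemma pw2:
  fixes a H v vh \<delta> :: real
  assumes d: "0 < \<delta>" and c: "vh < v - 2*\<delta>" and bd: "\<delta> \<le> \<bar>a - H\<bar> \<Longrightarrow> Bd"
  shows "of_bool (v - \<delta> \<le> H) - of_bool Bd \<le> (of_bool (vh < a) :: real)"
proof (cases "v - \<delta> \<le> H \<and> \<not> Bd")
  case True
  then have "\<bar>a - H\<bar> < \<delta>" using bd by force
  then show ?thesis using True c by auto
next
  case False then show ?thesis by auto
qed

lemma ceil_bounds:
  fixes \<alpha> :: real
  assumes "0 < \<alpha>" "\<alpha> < 1" "1 \<le> n"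
  shows "1 \<le> nat \<lceil>\<alpha> * real n\<rceil>" "nat \<lceil>\<alpha> * real n\<rceil> \<le> n"
    "\<alpha> * real n \<le> real (nat \<lceil>\<alpha> * real n\<rceil>)" "real (nat \<lceil>\<alpha> * real n\<rceil>) \<le> \<alpha> * real n + 1"
proof -
  have pos: "0 < \<alpha> * real n" using assms by simp
  have le: "\<alpha> * real n \<le> real n" using assms by simp
  show "1 \<le> nat \<lceil>\<alpha> * real n\<rceil>" using pos by linarith
  show "nat \<lceil>\<alpha> * real n\<rceil> \<le> n" using le
    by (metis ceiling_mono ceiling_of_nat nat_int nat_mono)
  show "\<alpha> * real n \<le> real (nat \<lceil>\<alpha> * real n\<rceil>)" using pos by linarith
  show "real (nat \<lceil>\<alpha> * real n\<rceil>) \<le> \<alpha> * real n + 1" using pos by linarith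
qed

lemma det_main:
  fixes a :: "nat \<Rightarrow> nat \<Rightarrow> real" and H :: "nat \<Rightarrow> real" and d :: "nat \<Rightarrow> real"
    and p0 :: real and p1 p2 :: "nat \<Rightarrow> real" and q :: "nat \<Rightarrow> nat \<Rightarrow> real"
  assumes \<alpha>: "0 < \<alpha>" "\<alpha> < 1"
    and d: "\<And>k. 0 < d k"
    and L0: "(\<lambda>n. (\<Sum>i<n. of_bool (v \<le> H i)) / real n) \<longlonglongrightarrow> p0" and p0: "p0 \<le> 1 - \<alpha>"
    and L1: "\<And>k. (\<lambda>n. (\<Sum>i<n. of_bool (v - d k \<le> H i)) / real n) \<longlonglongrightarrow> p1 k"
    and p1: "\<And>k. 1 - \<alpha> < p1 k"
    and L2: "\<And>k. (\<lambda>n. (\<Sum>i<n. of_bool (v - 3 * d k < H i \<and> H i < v)) / real n) \<longlonglongrightarrow> p2 k"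
    and p2: "p2 \<longlonglongrightarrow> 0"
    and LD: "\<And>k M. (\<lambda>n. (\<Sum>i<n. of_bool (\<exists>m\<ge>M. d k \<le> \<bar>a m i - H i\<bar>)) / real n) \<longlonglongrightarrow> q k M"
    and q: "\<And>k. (\<lambda>M. q k M) \<longlonglongrightarrow> 0"
  shows "((\<lambda>(n, m). (\<Sum>i<n. \<bar>of_bool (order_stat n (a m) (nat \<lceil>\<alpha> * real n\<rceil>) \<le> a m i)
                        - of_bool (v \<le> H i)\<bar>) / real n) \<longlongrightarrow> (0::real)) (sequentially \<times>\<^sub>F sequentially)"
proof (rule tendstoI)
  fix \<epsilon> :: real assume e: "0 < \<epsilon>"
  have "eventually (\<lambda>k. p2 k < \<epsilon>/16) sequentially"
    using order_tendstoD(2)[OF p2, of "\<epsilon>/16"] e by simp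
  then obtain k where k: "p2 k < \<epsilon>/16" by (auto simp: eventually_sequentially)
  define \<delta> where "\<delta> = d k"
  have \<delta>: "0 < \<delta>" unfolding \<delta>_def by (rule d)
  define \<gamma> where "\<gamma> = p1 k - (1 - \<alpha>)"
  have \<gamma>: "0 < \<gamma>" unfolding \<gamma>_def using p1[of k] by simp
  define \<eta> where "\<eta> = min (\<epsilon>/16) (\<gamma>/4)"
  have \<eta>: "0 < \<eta>" unfolding \<eta>_def using e \<gamma> by simp
  have "eventually (\<lambda>M. q k M < \<eta>) sequentially"
    using order_tendstoD(2)[OF q \<eta>] .
  then obtain M where M: "q k M < \<eta>" by (auto simp: eventually_sequentially)
  define S0 where "S0 n = (\<Sum>i<n. of_bool (v \<le> H i) :: real)" for n
  define S1 where "S1 n = (\<Sum>i<n. of_bool (v - \<delta> \<le> H i) :: real)" for n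
  define S2 where "S2 n = (\<Sum>i<n. of_bool (v - 3 * \<delta> < H i \<and> H i < v) :: real)" for n
  define SD where "SD n = (\<Sum>i<n. of_bool (\<exists>m\<ge>M. \<delta> \<le> \<bar>a m i - H i\<bar>) :: real)" for n
  have ev: "eventually (\<lambda>n. S0 n / real n < p0 + \<epsilon>/8 \<and> p1 k - \<gamma>/4 < S1 n / real n \<and>
      S2 n / real n < p2 k + \<epsilon>/16 \<and> SD n / real n < q k M + \<eta> \<and> 1 \<le> n) sequentially"
  proof (intro eventually_conj)
    show "eventually (\<lambda>n. S0 n / real n < p0 + \<epsilon>/8) sequentially"
      using order_tendstoD(2)[OF L0, of "p0 + \<epsilon>/8"] e unfolding S0_def by simp
    show "eventually (\<lambda>n. p1 k - \<gamma>/4 < S1 n / real n) sequentially"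
      using order_tendstoD(1)[OF L1[of k], of "p1 k - \<gamma>/4"] \<gamma> unfolding S1_def \<delta>_def by simp
    show "eventually (\<lambda>n. S2 n / real n < p2 k + \<epsilon>/16) sequentially"
      using order_tendstoD(2)[OF L2[of k], of "p2 k + \<epsilon>/16"] e unfolding S2_def \<delta>_def by simp
    show "eventually (\<lambda>n. SD n / real n < q k M + \<eta>) sequentially"
      using order_tendstoD(2)[OF LD[of M k], of "q k M + \<eta>"] \<eta> unfolding SD_def \<delta>_def by simp
    show "eventually (\<lambda>n. 1 \<le> n) sequentially" by (rule eventually_ge_at_top)
  qed
  then obtain N where N: "\<And>n. n \<ge> N \<Longrightarrow> S0 n / real n < p0 + \<epsilon>/8 \<and> p1 k - \<gamma>/4 < S1 n / real n \<and>
      S2 n / real n < p2 k + \<epsilon>/16 \<and> SD n / real n < q k M + \<eta> \<and> 1 \<le> n"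
    by (auto simp: eventually_sequentially)
  show "eventually (\<lambda>x. dist ((\<lambda>(n, m). (\<Sum>i<n. \<bar>of_bool (order_stat n (a m) (nat \<lceil>\<alpha> * real n\<rceil>) \<le> a m i)
                        - of_bool (v \<le> H i)\<bar>) / real n) x) 0 < \<epsilon>) (sequentially \<times>\<^sub>F sequentially)"
    unfolding eventually_prod_sequentially
  proof (intro exI[of _ "max N M"] allI impI)
    fix m n :: nat assume mM: "max N M \<le> m" and nN: "max N M \<le> n"
    from N[of n] nN have n1: "1 \<le> n" and A0: "S0 n / real n < p0 + \<epsilon>/8" and A1: "p1 k - \<gamma>/4 < S1 n / real n"
      and A2: "S2 n / real n < p2 k + \<epsilon>/16" and AD: "SD n / real n < q k M + \<eta>" by auto
    have npos: "0 < real n" using n1 by simp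
    have B0: "S0 n < (p0 + \<epsilon>/8) * real n" using A0 npos by (simp add: divide_less_eq)
    have B1: "(p1 k - \<gamma>/4) * real n < S1 n" using A1 npos by (simp add: less_divide_eq)
    have B2: "S2 n < (\<epsilon>/8) * real n"
    proof -
      have "S2 n < (p2 k + \<epsilon>/16) * real n" using A2 npos by (simp add: divide_less_eq)
      also have "\<dots> \<le> (\<epsilon>/8) * real n" using k npos by (intro mult_right_mono) auto
      finally show ?thesis .
    qed
    have BD: "SD n < (q k M + \<eta>) * real n" using AD npos by (simp add: divide_less_eq)
    have BD1: "SD n < (\<epsilon>/8) * real n"
    proof -
      have "q k M + \<eta> \<le> \<epsilon>/8" using M unfolding \<eta>_def by linarith
      then show ?thesis using BD npos by (smt (verit) mult_right_mono)
    qed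
    have BD2: "SD n < (\<gamma>/2) * real n"
    proof -
      have "q k M + \<eta> \<le> \<gamma>/2" using M unfolding \<eta>_def by linarith
      then show ?thesis using BD npos by (smt (verit) mult_right_mono)
    qed
    define K where "K = nat \<lceil>\<alpha> * real n\<rceil>"
    note Kb = ceil_bounds[OF \<alpha> n1, folded K_def]
    define vh where "vh = order_stat n (a m) K"
    have bd: "\<And>i. \<delta> \<le> \<bar>a m i - H i\<bar> \<Longrightarrow> (\<exists>m'\<ge>M. \<delta> \<le> \<bar>a m' i - H i\<bar>)"
      using mM by auto
    define TT where "TT = (\<Sum>i<n. \<bar>of_bool (vh \<le> a m i) - of_bool (v \<le> H i)\<bar> :: real)"
    have TT0: "0 \<le> TT" unfolding TT_def by (intro sum_nonneg) auto
    have "TT < \<epsilon> * real n"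
    proof (cases "v - 2 * \<delta> \<le> vh")
      case True
      have "TT \<le> (\<Sum>i<n. of_bool (v \<le> H i) - of_bool (vh \<le> a m i)
           + 2 * (of_bool (\<exists>m'\<ge>M. \<delta> \<le> \<bar>a m' i - H i\<bar>) + of_bool (v - 3*\<delta> < H i \<and> H i < v) :: real))"
        unfolding TT_def by (intro sum_mono pw1[OF \<delta> True] bd)
      also have "\<dots> = S0 n - (\<Sum>i<n. of_bool (vh \<le> a m i)) + 2 * SD n + 2 * S2 n"
        unfolding S0_def SD_def S2_def by (simp add: sum.distrib sum_subtractf sum_distrib_left)
      also have "\<dots> \<le> S0 n - (real n - real K + 1) + 2 * SD n + 2 * S2 n"
        using os_ge[OF Kb(1,2), of "a m"] unfolding vh_def by simp
      also have "\<dots> < (p0 + \<epsilon>/8) * real n - (1 - \<alpha>) * real n + 2 * ((\<epsilon>/8) * real n) + 2 * ((\<epsilon>/8) * real n)"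
        using B0 BD1 B2 Kb(4) by (simp add: algebra_simps)
      also have "\<dots> \<le> \<epsilon> * real n"
      proof -
        have "(p0 + \<epsilon>/8) * real n - (1 - \<alpha>) * real n + 2 * ((\<epsilon>/8) * real n) + 2 * ((\<epsilon>/8) * real n)
              = (p0 - (1 - \<alpha>) + 5 * \<epsilon> / 8) * real n" by (simp add: algebra_simps)
        also have "\<dots> \<le> \<epsilon> * real n" using p0 e npos by (intro mult_right_mono) auto
        finally show ?thesis .
      qed
      finally show ?thesis .
    next
      case False
      then have c: "vh < v - 2 * \<delta>" by simp
      have "S1 n - SD n \<le> (\<Sum>i<n. of_bool (vh < a m i))"
      proof -
        have "S1 n - SD n = (\<Sum>i<n. of_bool (v - \<delta> \<le> H i) - of_bool (\<exists>m'\<ge>M. \<delta> \<le> \<bar>a m' i - H i\<bar>) :: real)"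
          unfolding S1_def SD_def by (simp add: sum_subtractf)
        also have "\<dots> \<le> (\<Sum>i<n. of_bool (vh < a m i))"
          by (intro sum_mono pw2[OF \<delta> c] bd)
        finally show ?thesis .
      qed
      also have "\<dots> \<le> real n - real K"
        using os_gt[OF Kb(1,2), of "a m"] unfolding vh_def by simp
      also have "\<dots> \<le> (1 - \<alpha>) * real n" using Kb(3) by (simp add: algebra_simps)
      finally have "S1 n - SD n \<le> (1 - \<alpha>) * real n" .
      moreover have "(1 - \<alpha>) * real n < S1 n - SD n"
      proof -
        have cc: "(1 - \<alpha>) + \<gamma>/4 = (p1 k - \<gamma>/4) - \<gamma>/2" unfolding \<gamma>_def by (simp add: diff_divide_distrib)
        have "(1 - \<alpha>) * real n + (\<gamma>/4) * real n = ((1 - \<alpha>) + \<gamma>/4) * real n" by (simp add: distrib_right)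
        also have "\<dots> = ((p1 k - \<gamma>/4) - \<gamma>/2) * real n" by (simp only: cc)
        also have "\<dots> = (p1 k - \<gamma>/4) * real n - (\<gamma>/2) * real n" by (simp add: left_diff_distrib)
        also have "\<dots> < S1 n - SD n" using B1 BD2 by linarith
        finally have "(1 - \<alpha>) * real n + (\<gamma>/4) * real n < S1 n - SD n" .
        moreover have "0 < (\<gamma>/4) * real n" using \<gamma> npos by simp
        ultimately show ?thesis by linarith
      qed
      ultimately show ?thesis by simp
    qed
    then have "TT / real n < \<epsilon>" using npos by (simp add: divide_less_eq)
    then show "dist ((\<lambda>(n, m). (\<Sum>i<n. \<bar>of_bool (order_stat n (a m) (nat \<lceil>\<alpha> * real n\<rceil>) \<le> a m i)
                        - of_bool (v \<le> H i)\<bar>) / real n) (n, m)) 0 < \<epsilon>"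
      using TT0 npos unfolding TT_def vh_def K_def by (simp add: dist_real_def)
  qed
qed

lemma quantile_props:
  fixes D :: "real measure"
  assumes D: "real_distribution D" and \<alpha>: "0 < \<alpha>" "\<alpha> < 1"
  defines "v \<equiv> Inf {t. cdf D t \<ge> \<alpha>}"
  shows "\<alpha> \<le> cdf D v" and "\<And>t. t < v \<Longrightarrow> cdf D t < \<alpha>"
proof -
  interpret real_distribution D by (rule D)
  define S where "S = {t. cdf D t \<ge> \<alpha>}"
  have "eventually (\<lambda>t. cdf D t > \<alpha>) at_top"
    using order_tendstoD(1)[OF cdf_lim_at_top_prob \<alpha>(2)] .
  then obtain t0 where "cdf D t0 > \<alpha>" by (auto simp: eventually_at_top_linorder)
  then have ne: "S \<noteq> {}" unfolding S_def by (auto intro!: exI[of _ t0])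
  have "eventually (\<lambda>t. cdf D t < \<alpha>) at_bot"
    using order_tendstoD(2)[OF cdf_lim_at_bot \<alpha>(1)] .
  then obtain b where b: "\<And>t. t \<le> b \<Longrightarrow> cdf D t < \<alpha>" by (auto simp: eventually_at_bot_linorder)
  have bdd: "bdd_below S"
  proof (rule bdd_belowI)
    fix s assume "s \<in> S"
    then show "b \<le> s" using b[of s] unfolding S_def by force
  qed
  have v: "v = Inf S" unfolding v_def S_def ..
  show lt: "cdf D t < \<alpha>" if t: "t < v" for t
  proof (rule ccontr)
    assume "\<not> cdf D t < \<alpha>"
    then have "t \<in> S" unfolding S_def by simp
    then have "Inf S \<le> t" using bdd by (rule cInf_lower)
    then show False using t v by simp
  qed
  show "\<alpha> \<le> cdf D v"
  proof (rule ccontr)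
    assume c: "\<not> \<alpha> \<le> cdf D v"
    have "continuous (at_right v) (cdf D)" by (rule cdf_is_right_cont)
    then have "((cdf D) \<longlongrightarrow> cdf D v) (at_right v)" by (simp add: continuous_within)
    then have "eventually (\<lambda>t. cdf D t < \<alpha>) (at_right v)"
      using c by (intro order_tendstoD(2)) auto
    then obtain e where e: "e > v" and E: "\<And>t. v < t \<Longrightarrow> t < e \<Longrightarrow> cdf D t < \<alpha>"
      by (auto simp: eventually_at_right_field)
    obtain s where s: "s \<in> S" "s < e" using cInf_lessD[OF ne, of e] e v by auto
    have "v \<le> s" using cInf_lower[OF s(1) bdd] v by simp
    then show False
      using s E[of s] c unfolding S_def by (cases "v = s") auto
  qed
qed

lemma D_probs:
  fixes D :: "real measure"
  assumes D: "real_distribution D" and \<alpha>: "0 < \<alpha>" "\<alpha> < 1"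
    and v: "v = Inf {t. cdf D t \<ge> \<alpha>}" and atom: "measure D {v} = 0"
  shows "measure D {v..} \<le> 1 - \<alpha>"
    and "\<And>t. t < v \<Longrightarrow> 1 - \<alpha> < measure D {t..}"
    and "(\<lambda>k. measure D {v - 3 * inverse (real (Suc k)) <..< v}) \<longlonglongrightarrow> 0"
proof -
  interpret real_distribution D by (rule D)
  note Q = quantile_props[OF D \<alpha>, folded v]
  have up: "measure D {t..} = 1 - measure D {..<t}" for t
  proof -
    have "UNIV - {..<t} = {t..}" by auto
    then show ?thesis using prob_compl[of "{..<t}"] by simp
  qed
  have cd: "cdf D t = measure D {..<t} + measure D {t}" for t
  proof -
    have "{..t} = {..<t} \<union> {t}" by auto
    moreover have "measure D ({..<t} \<union> {t}) = measure D {..<t} + measure D {t}"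
      by (rule finite_measure_Union) auto
    ultimately show ?thesis unfolding cdf_def2 by simp
  qed
  show "measure D {v..} \<le> 1 - \<alpha>" using up[of v] cd[of v] atom Q(1) by simp
  show "1 - \<alpha> < measure D {t..}" if t: "t < v" for t
  proof -
    have "measure D {..<t} \<le> cdf D t" unfolding cdf_def2 by (intro finite_measure_mono) auto
    then show ?thesis using up[of t] Q(2)[OF t] by simp
  qed
  define A where "A k = {v - 3 * inverse (real (Suc k)) <..< v}" for k
  have dec: "decseq A"
    unfolding decseq_def A_def
  proof (intro allI impI subsetI)
    fix m n :: nat and y assume mn: "m \<le> n" and y: "y \<in> {v - 3 * inverse (real (Suc n)) <..< v}"
    have "inverse (real (Suc n)) \<le> inverse (real (Suc m))" using mn by (simp add: field_simps)
    moreover have "v - 3 * inverse (real (Suc n)) < y" "y < v" using y by auto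
    moreover have gen: "\<And>a b::real. a \<le> b \<Longrightarrow> v - 3*a < y \<Longrightarrow> v - 3*b < y" by linarith
    ultimately have "v - 3 * inverse (real (Suc m)) < y" by blast
    then show "y \<in> {v - 3 * inverse (real (Suc m)) <..< v}" using \<open>y < v\<close> by auto
  qed
  have empty: "(\<Inter>k. A k) = {}"
  proof (rule ccontr)
    assume "(\<Inter>k. A k) \<noteq> {}"
    then obtain y where y: "\<And>k. y \<in> A k" by auto
    then have yv: "y < v" unfolding A_def by auto
    obtain k where k: "inverse (real (Suc k)) < (v - y) / 3"
      using ex_inverse_of_nat_less[of "(v - y)/3"] yv by (metis Suc_pred zero_less_divide_iff zero_less_numeral diff_gt_0_iff_gt)
    then show False using y[of k] unfolding A_def by auto
  qed
  have "(\<lambda>k. measure D (A k)) \<longlonglongrightarrow> measure D (\<Inter>k. A k)"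
    by (rule finite_Lim_measure_decseq[OF _ dec]) (auto simp: A_def)
  then have "(\<lambda>k. measure D (A k)) \<longlonglongrightarrow> 0" by (simp only: empty) simp
  then show "(\<lambda>k. measure D {v - 3 * inverse (real (Suc k)) <..< v}) \<longlonglongrightarrow> 0"
    unfolding A_def .
qed

lemma integral_of_bool:
  assumes M: "prob_space M" and Pr[measurable]: "Measurable.pred M Pr"
  shows "(\<integral>b. of_bool (Pr b) \<partial>M) = measure M {b\<in>space M. Pr b}"
proof -
  interpret prob_space M by (rule M)
  have "(\<integral>b. of_bool (Pr b) \<partial>M) = (\<integral>b. indicator {b\<in>space M. Pr b} b \<partial>M)"
    by (rule Bochner_Integration.integral_cong[OF refl]) (auto simp: indicator_def)
  also have "\<dots> = measure M {b\<in>space M. Pr b}"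
    by (simp add: Int_absorb2)
  finally show ?thesis .
qed

lemma slln_bounded:
  fixes Q :: "'a measure" and \<phi> :: "'a \<Rightarrow> real"
  assumes Q: "prob_space Q" and \<phi>[measurable]: "\<phi> \<in> borel_measurable Q" and b: "\<And>y. \<bar>\<phi> y\<bar> \<le> 1"
  shows "AE s in PiM UNIV (\<lambda>_::nat. Q). (\<lambda>n. (\<Sum>i<n. \<phi> (s i)) / real n) \<longlonglongrightarrow> (\<integral>y. \<phi> y \<partial>Q)"
proof (rule slln[OF Q \<phi>])
  interpret prob_space Q by (rule Q)
  show "integrable Q (\<lambda>x. (\<phi> x)\<^sup>2)"
  proof (rule integrable_const_bound[where B=1])
    show "AE x in Q. norm ((\<phi> x)\<^sup>2) \<le> 1"
      using b by (auto intro!: AE_I2 simp: abs_square_le_1)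
  qed simp
qed

theorem proposition2:
  fixes X :: "real set" and x \<alpha> :: real
    and PN :: "'p measure" and P :: "'p \<Rightarrow> 'e::euclidean_space measure"
    and h :: "real \<Rightarrow> 'e \<Rightarrow> real"
  assumes "compact X" and "X \<noteq> {}" and "x \<in> X"
    and "0 < \<alpha>" and "\<alpha> < 1"
    and "prob_space PN"
    and "P \<in> measurable PN (prob_algebra borel)"
    and "\<And>y. y \<in> X \<Longrightarrow> h y \<in> borel_measurable borel"
    and "A1 X PN P h"
    and "measure PN {\<theta> \<in> space PN. Hval P h x \<theta> = quantile PN (Hval P h x) \<alpha>} = 0"
  shows "AE \<omega> in sampling_space PN P.
     ((\<lambda>(n, m). (\<Sum>i<n. \<bar>of_bool (Hhat h x m (snd (\<omega> i)) \<ge> vhat h x \<alpha> n m \<omega>)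
                        - of_bool (Hval P h x (fst (\<omega> i)) \<ge> quantile PN (Hval P h x) \<alpha>)\<bar>) / real n)
      \<longlongrightarrow> (0::real)) (sequentially \<times>\<^sub>F sequentially)"
proof -
  note xX = assms(3) and \<alpha> = assms(4,5) and PN = assms(6) and P = assms(7) and A1 = assms(9)
    and atom0 = assms(10)
  interpret PN: prob_space PN by (rule PN)
  have hx[measurable]: "h x \<in> borel_measurable borel" using assms(8)[OF xX] .
  define H\<theta> where "H\<theta> = Hval P h x"
  have H\<theta>m[measurable]: "H\<theta> \<in> borel_measurable PN"
  proof -
    have "(\<lambda>\<theta>. integral\<^sup>L (P \<theta>) (h x)) \<in> borel_measurable PN"
      by (rule measurable_compose[OF measurable_prob_algebraD[OF P] integral_measurable_subprob_algebra[OF hx]])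
    then show ?thesis unfolding H\<theta>_def Hval_def by simp
  qed
  define D where "D = distr PN borel H\<theta>"
  have Dr: "real_distribution D" unfolding D_def by (rule PN.real_distribution_distr) simp
  have mD: "measure PN {\<theta>\<in>space PN. H\<theta> \<theta> \<in> A} = measure D A" if A: "A \<in> sets borel" for A
  proof -
    have "measure D A = measure PN (H\<theta> -` A \<inter> space PN)"
      unfolding D_def by (rule measure_distr) (use A in auto)
    also have "H\<theta> -` A \<inter> space PN = {\<theta>\<in>space PN. H\<theta> \<theta> \<in> A}" by auto
    finally show ?thesis by simp
  qed
  have cdfeq: "measure PN {\<theta>\<in>space PN. H\<theta> \<theta> \<le> t} = cdf D t" for t
    using mD[of "{..t}"] unfolding cdf_def2 by simp
  define v where "v = quantile PN H\<theta> \<alpha>"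
  have v': "v = Inf {t. cdf D t \<ge> \<alpha>}"
    unfolding v_def quantile_def cdfeq ..
  have atom: "measure D {v} = 0"
    using atom0 mD[of "{v}"] unfolding H\<theta>_def[symmetric] v_def[symmetric] by simp
  note DP = D_probs[OF Dr \<alpha> v' atom]
  define B where "B = block_law PN P"
  have Bp: "prob_space B" unfolding B_def by (rule block_prob[OF PN P])
  interpret B: prob_space B by (rule Bp)
  have sB: "sets B = sets (PN \<Otimes>\<^sub>M PiM UNIV (\<lambda>_::nat. (borel::'e measure)))"
    unfolding B_def by (rule sets_block[OF PN P])
  have fstB[measurable]: "fst \<in> B \<rightarrow>\<^sub>M PN" by (simp add: measurable_cong_sets[OF sB refl])
  have sndB[measurable]: "snd \<in> B \<rightarrow>\<^sub>M PiM UNIV (\<lambda>_::nat. (borel::'e measure))"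
    by (simp add: measurable_cong_sets[OF sB refl])
  have Hhm[measurable]: "(\<lambda>b. Hhat h x m (snd b)) \<in> borel_measurable B" for m
    unfolding Hhat_def by measurable
  have HBm[measurable]: "(\<lambda>b. H\<theta> (fst b)) \<in> borel_measurable B" by measurable
  have dfst: "distr B PN fst = PN" unfolding B_def by (rule distr_block_fst[OF PN P])
  have mB: "measure B {b\<in>space B. H\<theta> (fst b) \<in> A} = measure D A" if A: "A \<in> sets borel" for A
  proof -
    have "{b\<in>space B. H\<theta> (fst b) \<in> A} = fst -` {\<theta>\<in>space PN. H\<theta> \<theta> \<in> A} \<inter> space B"
      using measurable_space[OF fstB] by auto
    then have "measure B {b\<in>space B. H\<theta> (fst b) \<in> A} = measure (distr B PN fst) {\<theta>\<in>space PN. H\<theta> \<theta> \<in> A}"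
      using A by (simp add: measure_distr)
    then show ?thesis using mD[OF A] dfst by simp
  qed
  have ss: "sampling_space PN P = PiM UNIV (\<lambda>_::nat. B)" unfolding sampling_space_def B_def ..
  have SL: "AE \<omega> in sampling_space PN P. (\<lambda>n. (\<Sum>i<n. of_bool (Pr (\<omega> i))) / real n) \<longlonglongrightarrow> measure B {b\<in>space B. Pr b}"
    if Pr[measurable]: "Measurable.pred B Pr" for Pr
  proof -
    have "AE \<omega> in PiM UNIV (\<lambda>_::nat. B). (\<lambda>n. (\<Sum>i<n. of_bool (Pr (\<omega> i))) / real n) \<longlonglongrightarrow> (\<integral>b. of_bool (Pr b) \<partial>B)"
      by (rule slln_bounded[OF Bp]) auto
    then have "AE \<omega> in PiM UNIV (\<lambda>_::nat. B). (\<lambda>n. (\<Sum>i<n. of_bool (Pr (\<omega> i))) / real n) \<longlonglongrightarrow> measure B {b\<in>space B. Pr b}"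
      unfolding integral_of_bool[OF Bp Pr] .
    then show ?thesis unfolding ss .
  qed
  define d where "d k = inverse (real (Suc k))" for k
  have dpos: "0 < d k" for k unfolding d_def by simp
  have S0: "AE \<omega> in sampling_space PN P. (\<lambda>n. (\<Sum>i<n. of_bool (v \<le> H\<theta> (fst (\<omega> i)))) / real n) \<longlonglongrightarrow> measure D {v..}"
    using SL[of "\<lambda>b. v \<le> H\<theta> (fst b)"] mB[of "{v..}"] by simp
  have S1: "AE \<omega> in sampling_space PN P. \<forall>k. (\<lambda>n. (\<Sum>i<n. of_bool (v - d k \<le> H\<theta> (fst (\<omega> i)))) / real n) \<longlonglongrightarrow> measure D {v - d k..}"
    unfolding AE_all_countable
  proof
    fix k show "AE \<omega> in sampling_space PN P. (\<lambda>n. (\<Sum>i<n. of_bool (v - d k \<le> H\<theta> (fst (\<omega> i)))) / real n) \<longlonglongrightarrow> measure D {v - d k..}"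
      using SL[of "\<lambda>b. v - d k \<le> H\<theta> (fst b)"] mB[of "{v - d k..}"] by simp
  qed
  have S2: "AE \<omega> in sampling_space PN P. \<forall>k. (\<lambda>n. (\<Sum>i<n. of_bool (v - 3 * d k < H\<theta> (fst (\<omega> i)) \<and> H\<theta> (fst (\<omega> i)) < v)) / real n) \<longlonglongrightarrow> measure D {v - 3 * d k<..<v}"
    unfolding AE_all_countable
  proof
    fix k show "AE \<omega> in sampling_space PN P. (\<lambda>n. (\<Sum>i<n. of_bool (v - 3 * d k < H\<theta> (fst (\<omega> i)) \<and> H\<theta> (fst (\<omega> i)) < v)) / real n) \<longlonglongrightarrow> measure D {v - 3 * d k<..<v}"
      using SL[of "\<lambda>b. v - 3 * d k < H\<theta> (fst b) \<and> H\<theta> (fst b) < v"] mB[of "{v - 3 * d k<..<v}"] by simp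
  qed
  define q where "q k M = measure B {b\<in>space B. \<exists>m\<ge>M. d k \<le> \<bar>Hhat h x m (snd b) - H\<theta> (fst b)\<bar>}" for k M
  have SD: "AE \<omega> in sampling_space PN P. \<forall>k M. (\<lambda>n. (\<Sum>i<n. of_bool (\<exists>m\<ge>M. d k \<le> \<bar>Hhat h x m (snd (\<omega> i)) - H\<theta> (fst (\<omega> i))\<bar>)) / real n) \<longlonglongrightarrow> q k M"
    unfolding AE_all_countable
  proof (intro allI)
    fix k M show "AE \<omega> in sampling_space PN P. (\<lambda>n. (\<Sum>i<n. of_bool (\<exists>m\<ge>M. d k \<le> \<bar>Hhat h x m (snd (\<omega> i)) - H\<theta> (fst (\<omega> i))\<bar>)) / real n) \<longlonglongrightarrow> q k M"
      unfolding q_def by (rule SL) measurable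
  qed
  have mom: "AE \<theta> in PN. (\<integral>\<^sup>+\<xi>. ennreal ((h x \<xi>)\<^sup>2) \<partial>(P \<theta>)) < \<infinity>"
    using A1 xX unfolding A1_def by blast
  have conv: "AE b in B. \<exists>M. \<forall>m\<ge>M. \<bar>Hhat h x m (snd b) - H\<theta> (fst b)\<bar> < d k" for k
    unfolding B_def
  proof (rule AE_block[OF PN P])
    show "Measurable.pred (PN \<Otimes>\<^sub>M PiM UNIV (\<lambda>_::nat. (borel::'e measure)))
        (\<lambda>b. \<exists>M. \<forall>m\<ge>M. \<bar>Hhat h x m (snd b) - H\<theta> (fst b)\<bar> < d k)"
      unfolding Hhat_def by measurable
    show "AE \<theta> in PN. AE s in PiM UNIV (\<lambda>_::nat. P \<theta>).
        (\<lambda>b. \<exists>M. \<forall>m\<ge>M. \<bar>Hhat h x m (snd b) - H\<theta> (fst b)\<bar> < d k) (\<theta>, s)"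
      using mom AE_space
    proof (eventually_elim)
      case (elim \<theta>)
      have Pth: "P \<theta> \<in> space (prob_algebra borel)" using measurable_space[OF P elim(2)] .
      then have sP: "sets (P \<theta>) = sets borel" and pP: "prob_space (P \<theta>)"
        by (auto simp: space_prob_algebra)
      have gm: "h x \<in> borel_measurable (P \<theta>)" by (simp add: measurable_cong_sets[OF sP refl])
      have sq: "integrable (P \<theta>) (\<lambda>\<xi>. (h x \<xi>)\<^sup>2)"
        unfolding integrable_iff_bounded using gm elim(1) by simp
      have "AE s in PiM UNIV (\<lambda>_::nat. P \<theta>). (\<lambda>m. (\<Sum>j<m. h x (s j)) / real m) \<longlonglongrightarrow> (\<integral>\<xi>. h x \<xi> \<partial>P \<theta>)"
        by (rule slln[OF pP gm sq])
      then show ?case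
      proof (rule eventually_mono)
        fix s assume t: "(\<lambda>m. (\<Sum>j<m. h x (s j)) / real m) \<longlonglongrightarrow> (\<integral>\<xi>. h x \<xi> \<partial>P \<theta>)"
        have "eventually (\<lambda>m. dist ((\<Sum>j<m. h x (s j)) / real m) (\<integral>\<xi>. h x \<xi> \<partial>P \<theta>) < d k) sequentially"
          by (rule tendstoD[OF t dpos])
        then show "(\<lambda>b. \<exists>M. \<forall>m\<ge>M. \<bar>Hhat h x m (snd b) - H\<theta> (fst b)\<bar> < d k) (\<theta>, s)"
          by (simp add: eventually_sequentially Hhat_def H\<theta>_def Hval_def dist_real_def)
      qed
    qed
  qed
  have qlim: "(\<lambda>M. q k M) \<longlonglongrightarrow> 0" for k
  proof -
    define E where "E M = {b\<in>space B. \<exists>m\<ge>M. d k \<le> \<bar>Hhat h x m (snd b) - H\<theta> (fst b)\<bar>}" for M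
    have Em[measurable]: "E M \<in> sets B" for M unfolding E_def by measurable
    have dec: "decseq E" unfolding decseq_def E_def by (auto intro: order_trans)
    have "(\<lambda>M. measure B (E M)) \<longlonglongrightarrow> measure B (\<Inter>M. E M)"
      by (rule B.finite_Lim_measure_decseq[OF _ dec]) auto
    moreover have "emeasure B (\<Inter>M. E M) = 0"
    proof (rule AE_iff_measurable[THEN iffD1, OF _ _ conv[of k]])
      show "(\<Inter>M. E M) \<in> sets B" by auto
      show "{b \<in> space B. \<not> (\<exists>M. \<forall>m\<ge>M. \<bar>Hhat h x m (snd b) - H\<theta> (fst b)\<bar> < d k)} = (\<Inter>M. E M)"
        unfolding E_def by (auto simp: not_less)
    qed
    then have "measure B (\<Inter>M. E M) = 0" by (simp add: B.emeasure_eq_measure)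
    ultimately show ?thesis unfolding q_def E_def by simp
  qed
  have p2lim: "(\<lambda>k. measure D {v - 3 * d k<..<v}) \<longlonglongrightarrow> 0" using DP(3) unfolding d_def .
  have p1: "1 - \<alpha> < measure D {v - d k..}" for k using DP(2)[of "v - d k"] dpos[of k] by simp
  from S0 S1 S2 SD show ?thesis
  proof eventually_elim
    case (elim \<omega>)
    have "((\<lambda>(n, m). (\<Sum>i<n. \<bar>of_bool (order_stat n ((\<lambda>m i. Hhat h x m (snd (\<omega> i))) m) (nat \<lceil>\<alpha> * real n\<rceil>) \<le> (\<lambda>m i. Hhat h x m (snd (\<omega> i))) m i)
                        - of_bool (v \<le> (\<lambda>i. H\<theta> (fst (\<omega> i))) i)\<bar>) / real n) \<longlongrightarrow> (0::real)) (sequentially \<times>\<^sub>F sequentially)"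
      by (rule det_main[OF \<alpha> dpos elim(1) DP(1) elim(2)[rule_format] p1 elim(3)[rule_format] p2lim elim(4)[rule_format] qlim])
    then show ?case unfolding vhat_def H\<theta>_def[symmetric] v_def[symmetric] by simp
  qed
qed

end
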